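(* Let $(X,\sigma)$ be a one-sided or two-sided subshift over a finite alphabet which has a forward Li-Yorke pair $x,y$. Then there exists $f\in E(X,\mathbb{Z}^+)$ such that $f(x)\neq f(y)$ but $f(x)$ and $f(y)$ are forward asymptotic. In particular, $f$ is not injective on its image and therefore $f$ is not a completely regular element of $X^X$.
   Context: For a finite alphabet $\mathcal A$, a one-sided (resp. two-sided) subshift is a closed subset $X\subset\mathcal A^{\mathbb{Z}^+}$ (resp. $\mathcal A^{\mathbb{Z}}$), product topology, invariant under the left shift $\sigma(x)_n=x_{n+1}$, with $\sigma$ restricted to $X$. $E(X,\mathbb{Z}^+)$ is the closure of $\{\sigma^n:n\ge0\}$ in $X^X$ (pointwise convergence topology, composition). Fix a compatible metric $d$. A pair is forward asymptotic if $\lim_{n\to+\infty}d(\sigma^nx,\sigma^ny)=0$, forward proximal if $\inf_{n\ge0}d(\sigma^nx,\sigma^ny)=0$, and a forward Li-Yorke pair if forward proximal but not forward asymptotic. An element $f$ of a semigroup is completely regular if there exists $g$ in it with $f=fgf$ and $fg=gf$. *)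

theory Defs
  imports "HOL-Analysis.Analysis"
begin

text \<open>Points of a full shift: functions from the index set (nat = Z+ for one-sided,
int = Z for two-sided) to the alphabet.  The alphabet is a finite set of natural
numbers; nat carries the discrete topology, and the function space carries the
product topology (library instance), with the library's compatible metric
(Function_Metric).\<close>

definition shift :: "('i::{plus,one} \<Rightarrow> 'a) \<Rightarrow> ('i \<Rightarrow> 'a)" where
  "shift x = (\<lambda>n. x (n + 1))"

definition subshift :: "nat set \<Rightarrow> ('i::{plus,one} \<Rightarrow> nat) set \<Rightarrow> bool" where
  "subshift A X \<longleftrightarrow> finite A \<and> X \<subseteq> {x. \<forall>n. x n \<in> A} \<and> closed X \<and> shift ` X \<subseteq> X"

definition fwd_asymptotic :: "('i::{countable,plus,one} \<Rightarrow> nat) \<Rightarrow> ('i \<Rightarrow> nat) \<Rightarrow> bool" where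
  "fwd_asymptotic x y \<longleftrightarrow> (\<lambda>n. dist ((shift ^^ n) x) ((shift ^^ n) y)) \<longlonglongrightarrow> 0"

definition fwd_proximal :: "('i::{countable,plus,one} \<Rightarrow> nat) \<Rightarrow> ('i \<Rightarrow> nat) \<Rightarrow> bool" where
  "fwd_proximal x y \<longleftrightarrow> (INF n. dist ((shift ^^ n) x) ((shift ^^ n) y)) = 0"

definition fwd_li_yorke :: "('i::{countable,plus,one} \<Rightarrow> nat) \<Rightarrow> ('i \<Rightarrow> nat) \<Rightarrow> bool" where
  "fwd_li_yorke x y \<longleftrightarrow> fwd_proximal x y \<and> \<not> fwd_asymptotic x y"

text \<open>Enveloping semigroup E(X,Z+): closure of {sigma^n restricted to X} in X^X with the
topology of pointwise convergence (product topology).  Maps X -> X are represented as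
extensional functions on X.\<close>
definition enveloping_semigroup ::
  "('i::{plus,one} \<Rightarrow> nat) set \<Rightarrow> (('i \<Rightarrow> nat) \<Rightarrow> ('i \<Rightarrow> nat)) set" where
  "enveloping_semigroup X =
     (product_topology (\<lambda>_. top_of_set X) X) closure_of {restrict (shift ^^ n) X | n. True}"

definition completely_regular_map :: "'b set \<Rightarrow> ('b \<Rightarrow> 'b) \<Rightarrow> bool" where
  "completely_regular_map X f \<longleftrightarrow>
     (\<exists>g \<in> X \<rightarrow>\<^sub>E X. compose X f (compose X g f) = f \<and> compose X f g = compose X g f)"

end

theory Submission
  imports Defs
begin

lemma shift_pow: "(shift ^^ n) x = (\<lambda>i. x (i + of_nat n))" for x :: "'i::comm_semiring_1 \<Rightarrow> 'a"
  by (induction n) (auto simp: shift_def add_ac)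

lemma summ_fun: "summable (\<lambda>n. (1/2)^n * min (dist (u (from_nat n)) (v (from_nat n))) (1::real))"
  for u v :: "'i::countable \<Rightarrow> real"
  by (rule summable_comparison_test'[of "\<lambda>n. (1/2)^n"], auto simp add: summable_geometric_iff)

lemma dist_lower:
  fixes u v :: "'i::countable \<Rightarrow> nat"
  assumes "u i \<noteq> v i"
  shows "(1/2)^(to_nat i) \<le> dist (\<lambda>i. real (u i)) (\<lambda>i. real (v i))"
proof -
  have "dist (real (u i)) (real (v i)) \<ge> 1" using assms by (simp add: dist_real_def)
  then have e: "min (dist (real (u i)) (real (v i))) 1 = (1::real)" by simp
  have "(\<Sum>n\<in>{to_nat i}. (1/2)^n * min (dist (real (u (from_nat n))) (real (v (from_nat n)))) (1::real))
     \<le> dist (\<lambda>i. real (u i)) (\<lambda>i. real (v i))"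
    unfolding dist_fun_def by (rule sum_le_suminf[OF summ_fun]) auto
  then show ?thesis using e by simp
qed

lemma dist_upper:
  fixes u v :: "'i::countable \<Rightarrow> nat"
  assumes "\<And>n. n \<le> N \<Longrightarrow> u (from_nat n) = v (from_nat n)"
  shows "dist (\<lambda>i. real (u i)) (\<lambda>i. real (v i)) \<le> (1/2)^N"
proof -
  have "{dist (real (u (from_nat n))) (real (v (from_nat n)))|n. n \<le> N} = {0}"
    using assms by (auto intro!: exI[of _ 0])
  then show ?thesis using dist_fun_le_dist_first_terms[of "\<lambda>i. real (u i)" "\<lambda>i. real (v i)" N] by simp
qed

definition HI :: "'i::comm_semiring_1 itself \<Rightarrow> bool" where
  "HI T \<longleftrightarrow> (\<forall>i::'i. \<forall>N. \<exists>K. \<forall>n\<ge>K. \<exists>m\<ge>N. i + of_nat n = of_nat m)"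

lemma HI_nat: "HI TYPE(nat)"
  unfolding HI_def by (metis le_add2 order_trans of_nat_id)

lemma HI_int: "HI TYPE(int)"
  unfolding HI_def
proof (intro allI)
  fix i :: int and N :: nat
  show "\<exists>K. \<forall>n\<ge>K. \<exists>m\<ge>N. i + of_nat n = of_nat m"
    by (rule exI[of _ "N + nat (-i)"], intro allI impI, rule exI[of _ "nat (i + int _)"]) auto
qed

lemma asym_of_eventually:
  fixes u v :: "'i::{countable,comm_semiring_1} \<Rightarrow> nat"
  assumes H: "HI TYPE('i)" and ev: "\<And>m. m \<ge> N \<Longrightarrow> u (of_nat m) = v (of_nat m)"
  shows "fwd_asymptotic u v"
proof -
  from H obtain Kf where Kf: "\<And>i N n. n \<ge> Kf i N \<Longrightarrow> \<exists>m\<ge>N. i + of_nat n = (of_nat m :: 'i)"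
    unfolding HI_def by metis
  show ?thesis unfolding fwd_asymptotic_def
  proof (rule LIMSEQ_I)
    fix r :: real assume "0 < r"
    obtain M where M: "(1/2::real)^M < r" using real_arch_pow_inv[OF \<open>0<r\<close>, of "1/2"] by auto
    define K where "K = (\<Sum>k\<le>M. Kf (from_nat k) N)"
    have "norm (dist (\<lambda>i. real ((shift ^^ n) u i)) (\<lambda>i. real ((shift ^^ n) v i)) - 0) < r"
      if "n \<ge> K" for n
    proof -
      have "(shift ^^ n) u (from_nat k) = (shift ^^ n) v (from_nat k)" if "k \<le> M" for k
      proof -
        have "Kf (from_nat k) N \<le> K" unfolding K_def using that by (intro member_le_sum) auto
        then obtain m where "m \<ge> N" "from_nat k + of_nat n = (of_nat m :: 'i)"
          using Kf \<open>n \<ge> K\<close> by (meson order_trans)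
        then show ?thesis using ev by (simp add: shift_pow)
      qed
      then have "dist (\<lambda>i. real ((shift ^^ n) u i)) (\<lambda>i. real ((shift ^^ n) v i)) \<le> (1/2)^M"
        by (rule dist_upper)
      then show ?thesis using M by simp
    qed
    then show "\<exists>no. \<forall>n\<ge>no. norm (dist (\<lambda>i. real ((shift ^^ n) u i)) (\<lambda>i. real ((shift ^^ n) v i)) - 0) < r"
      by blast
  qed
qed


lemma window_lemma:
  fixes x y :: "'i::{countable,comm_semiring_1} \<Rightarrow> nat"
  assumes H: "HI TYPE('i)" and LY: "fwd_li_yorke x y"
  shows "\<exists>m. m \<ge> k \<and> x (of_nat m) \<noteq> y (of_nat m) \<and>
             (\<forall>j. 1 \<le> j \<and> j \<le> k \<longrightarrow> x (of_nat (m + j)) = y (of_nat (m + j)))"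
proof -
  define D where "D = {n::nat. x (of_nat n) \<noteq> y (of_nat n)}"
  define dd where "dd n = dist (\<lambda>i. real ((shift ^^ n) x i)) (\<lambda>i. real ((shift ^^ n) y i))" for n
  have "infinite D"
  proof
    assume "finite D"
    then obtain N where "\<forall>n\<in>D. n < N" using finite_nat_bounded by blast
    then have "\<And>m. m \<ge> N \<Longrightarrow> x (of_nat m) = y (of_nat m)" unfolding D_def by force
    then have "fwd_asymptotic x y" by (rule asym_of_eventually[OF H])
    then show False using LY unfolding fwd_li_yorke_def by simp
  qed
  then obtain d0 where d0: "d0 \<in> D" "d0 \<ge> k" using infinite_nat_iff_unbounded_le by blast
  define Mx where "Mx = Max ((\<lambda>j. to_nat (of_nat j :: 'i)) ` {..k})"
  have win: "x (of_nat j + of_nat n) = y (of_nat j + of_nat n)"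
    if "dd n < (1/2)^Mx" "j \<le> k" for n j
  proof (rule ccontr)
    assume "x (of_nat j + of_nat n) \<noteq> y (of_nat j + of_nat n)"
    then have "(shift ^^ n) x (of_nat j) \<noteq> (shift ^^ n) y (of_nat j)" by (simp add: shift_pow)
    then have "(1/2)^(to_nat (of_nat j :: 'i)) \<le> dd n" unfolding dd_def by (rule dist_lower)
    moreover have "to_nat (of_nat j :: 'i) \<le> Mx" unfolding Mx_def using that by (intro Max_ge) auto
    then have "(1/2::real)^Mx \<le> (1/2)^(to_nat (of_nat j :: 'i))" by (rule power_decreasing) auto
    ultimately show False using that by simp
  qed
  have ddpos: "dd n > 0" if "n \<le> d0" for n
  proof -
    have "(shift ^^ n) x (of_nat (d0 - n)) \<noteq> (shift ^^ n) y (of_nat (d0 - n))"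
      using d0 that by (simp add: shift_pow D_def flip: of_nat_add)
    then have "(1/2)^(to_nat (of_nat (d0-n) :: 'i)) \<le> dd n" unfolding dd_def by (rule dist_lower)
    moreover have "(0::real) < (1/2)^(to_nat (of_nat (d0-n) :: 'i))" by simp
    ultimately show ?thesis by linarith
  qed
  define del where "del = min ((1/2::real)^Mx) (Min (dd ` {..d0}))"
  have "del > 0" proof -
    have "0 < Min (dd ` {..d0})" using ddpos by (subst Min_gr_iff) auto
    then show ?thesis unfolding del_def by simp
  qed
  have "(INF n. dd n) = 0" using LY unfolding fwd_li_yorke_def fwd_proximal_def dd_def by simp
  moreover have "bdd_below (range dd)" unfolding dd_def by (intro bdd_belowI[of _ 0]) auto
  ultimately have "\<exists>n. dd n < del" using \<open>del > 0\<close> cINF_less_iff[of UNIV dd del] \<open>bdd_below (range dd)\<close> by auto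
  then obtain n where n: "dd n < del" by blast
  have "n > d0"
  proof (rule ccontr)
    assume "\<not> n > d0"
    then have "Min (dd ` {..d0}) \<le> dd n" by (intro Min_le) auto
    then show False using n \<open>\<not> n > d0\<close> unfolding del_def by auto
  qed
  have wn: "x (of_nat (n + j)) = y (of_nat (n + j))" if "j \<le> k" for j
    using win[of n j] n that unfolding del_def by (simp add: add.commute)
  define m where "m = Max {d\<in>D. d < n}"
  have fin: "finite {d\<in>D. d < n}" by simp
  have "d0 \<in> {d\<in>D. d < n}" using d0 \<open>n > d0\<close> by simp
  then have ne: "{d\<in>D. d < n} \<noteq> {}" by blast
  have "m \<in> {d\<in>D. d < n}" unfolding m_def using fin ne by (rule Max_in)
  moreover have "d0 \<le> m" unfolding m_def using fin \<open>d0 \<in> {d\<in>D. d < n}\<close> by (rule Max_ge)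
  ultimately have "m \<in> {d\<in>D. d < n}" "d0 \<le> m" by auto
  then have mD: "m \<in> D" "m < n" "m \<ge> k" using d0 by auto
  have "x (of_nat (m + j)) = y (of_nat (m + j))" if "1 \<le> j" "j \<le> k" for j
  proof (cases "m + j < n")
    case True
    have "m + j \<notin> D"
    proof
      assume "m + j \<in> D"
      then have "m + j \<in> {d\<in>D. d < n}" using True by simp
      then have "m + j \<le> m" unfolding m_def using fin by (rule Max_ge[rotated])
      then show False using that by simp
    qed
    then show ?thesis unfolding D_def by simp
  next
    case False
    then have e: "m + j = n + (m + j - n)" and "m + j - n \<le> k" using mD that by auto
    have "x (of_nat (n + (m + j - n))) = y (of_nat (n + (m + j - n)))" by (rule wn) fact
    then show ?thesis using e by simp
  qed
  then show ?thesis using mD unfolding D_def by (intro exI[of _ m]) simp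
qed


lemma subshift_compact_space:
  fixes X :: "('i::{plus,one} \<Rightarrow> nat) set"
  assumes "subshift A X"
  shows "compact_space (product_topology (\<lambda>_. top_of_set X) X)"
proof -
  have fA: "finite A" and sub: "X \<subseteq> {x. \<forall>n. x n \<in> A}" and cl: "closed X"
    using assms unfolding subshift_def by auto
  have "compactin (product_topology (\<lambda>_. euclidean) UNIV) (PiE UNIV (\<lambda>_::'i. A))"
    using fA by (subst compactin_PiE) (auto intro: finite_imp_compact)
  then have "compact (PiE UNIV (\<lambda>_::'i. A))" by (simp add: euclidean_product_topology)
  moreover have "PiE UNIV (\<lambda>_::'i. A) = {x. \<forall>n. x n \<in> A}" by (auto simp: PiE_def Pi_def)
  ultimately have "compact {x::'i\<Rightarrow>nat. \<forall>n. x n \<in> A}" by simp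
  then have "compact X" using cl sub by (metis compact_Int_closed inf.absorb_iff2)
  then have "compact_space (top_of_set X)" by (simp add: compact_space_subtopology)
  then show ?thesis by (simp add: compact_space_product_topology)
qed

lemma cont_eval:
  fixes X :: "('i \<Rightarrow> nat) set"
  assumes "a \<in> X"
  shows "continuous_map (product_topology (\<lambda>_. top_of_set X) X) euclidean (\<lambda>g. g a i)"
proof -
  have c1: "continuous_map (product_topology (\<lambda>_. top_of_set X) X) (top_of_set X) (\<lambda>g. g a)"
    using assms by (rule continuous_map_product_projection)
  have "continuous_map (product_topology (\<lambda>_. euclidean) UNIV) euclidean (\<lambda>z::'i\<Rightarrow>nat. z i)"
    by (rule continuous_map_product_projection) simp
  then have "continuous_map euclidean euclidean (\<lambda>z::'i\<Rightarrow>nat. z i)"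
    by (simp add: euclidean_product_topology)
  then have c2: "continuous_map (top_of_set X) euclidean (\<lambda>z::'i\<Rightarrow>nat. z i)"
    by (rule continuous_map_from_subtopology)
  show ?thesis using continuous_map_compose[OF c1 c2] by (simp add: o_def)
qed

lemma closure_transfer:
  fixes X :: "('i \<Rightarrow> nat) set"
  assumes "a \<in> X" "b \<in> X" "\<And>s. s \<in> S \<Longrightarrow> P (s a i) (s b j)"
    and g: "g \<in> (product_topology (\<lambda>_. top_of_set X) X) closure_of S"
  shows "P (g a i) (g b j)"
proof (rule ccontr)
  let ?T = "product_topology (\<lambda>_. top_of_set X) X"
  assume np: "\<not> P (g a i) (g b j)"
  define U where "U = {h \<in> topspace ?T. h a i \<in> {g a i}} \<inter> {h \<in> topspace ?T. h b j \<in> {g b j}}"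
  have "openin ?T U" unfolding U_def
    by (intro openin_Int openin_continuous_map_preimage[OF cont_eval] assms) (auto simp: open_discrete)
  moreover have "g \<in> U" using g unfolding U_def in_closure_of by auto
  ultimately obtain s where "s \<in> S" "s \<in> U" using g unfolding in_closure_of by blast
  then show False using assms(3)[of s] np unfolding U_def by auto
qed


lemma main_generic:
  fixes X :: "('i::{countable,comm_semiring_1} \<Rightarrow> nat) set" and x y :: "'i \<Rightarrow> nat"
  assumes H: "HI TYPE('i)" and ss: "subshift A X" and xX: "x \<in> X" and yX: "y \<in> X"
    and LY: "fwd_li_yorke x y"
  shows "\<exists>f \<in> enveloping_semigroup X. f x \<noteq> f y \<and> fwd_asymptotic (f x) (f y) \<and>
              \<not> inj_on f (f ` X) \<and> \<not> completely_regular_map X f"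
proof -
  let ?T = "product_topology (\<lambda>_. top_of_set X) X"
  have "\<forall>k. \<exists>m. m \<ge> k \<and> x (of_nat m) \<noteq> y (of_nat m) \<and>
             (\<forall>j. 1 \<le> j \<and> j \<le> k \<longrightarrow> x (of_nat (m + j)) = y (of_nat (m + j)))"
    using window_lemma[OF H LY] by blast
  then obtain m where m: "\<And>k. m k \<ge> k" "\<And>k. x (of_nat (m k)) \<noteq> y (of_nat (m k))"
    "\<And>k j. 1 \<le> j \<Longrightarrow> j \<le> k \<Longrightarrow> x (of_nat (m k + j)) = y (of_nat (m k + j))"
    by metis
  have shX: "(shift ^^ n) z \<in> X" if "z \<in> X" for n z
    using that
  proof (induction n)
    case (Suc n)
    then show ?case using ss unfolding subshift_def by auto
  qed simp
  have rtop: "restrict (shift ^^ n) X \<in> topspace ?T" for n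
    using shX by auto
  define S where "S K = {restrict (shift ^^ (m k)) X | k. k \<ge> K}" for K
  define C where "C K = ?T closure_of S K" for K
  have Stop: "S K \<subseteq> topspace ?T" for K unfolding S_def using shX by auto
  have "(\<Inter>K. C K) \<noteq> {}"
  proof (rule compact_space_imp_nest[OF subshift_compact_space[OF ss]])
    show "closedin ?T (C K)" for K unfolding C_def by simp
    show "C K \<noteq> {}" for K
    proof -
      have "restrict (shift ^^ (m K)) X \<in> S K" unfolding S_def by auto
      then show ?thesis unfolding C_def using closure_of_subset[OF Stop[of K]] by blast
    qed
    show "decseq C" unfolding decseq_def C_def
      by (intro allI impI closure_of_mono) (auto simp: S_def)
  qed
  then obtain f where fC: "\<And>K. f \<in> C K" by blast
  have ftop: "f \<in> topspace ?T" using fC[of 0] unfolding C_def in_closure_of by (rule conjunct1)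
  then have fX: "\<And>z. z \<in> X \<Longrightarrow> f z \<in> X" by auto
  have fE: "f \<in> enveloping_semigroup X"
  proof -
    have "S 0 \<subseteq> {restrict (shift ^^ n) X | n. True}" unfolding S_def by auto
    then show ?thesis using fC[of 0] unfolding C_def enveloping_semigroup_def
      using closure_of_mono by blast
  qed
  have d0: "f x 0 \<noteq> f y 0"
  proof (rule closure_transfer[OF xX yX _ fC[of 0, unfolded C_def], where P = "(\<noteq>)"])
    fix s assume "s \<in> S 0"
    then obtain k where "s = restrict (shift ^^ (m k)) X" unfolding S_def by auto
    then show "s x 0 \<noteq> s y 0" using m(2)[of k] xX yX by (simp add: shift_pow)
  qed
  have agree: "f x (of_nat j) = f y (of_nat j)" if "j \<ge> 1" for j
  proof (rule closure_transfer[OF xX yX _ fC[of j, unfolded C_def], where P = "(=)"])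
    fix s assume "s \<in> S j"
    then obtain k where k: "s = restrict (shift ^^ (m k)) X" "k \<ge> j" unfolding S_def by auto
    then show "s x (of_nat j) = s y (of_nat j)" using m(3)[of j k] xX yX that
      by (simp add: shift_pow add.commute)
  qed
  have neq: "f x \<noteq> f y" using d0 by auto
  have asym: "fwd_asymptotic (f x) (f y)" by (rule asym_of_eventually[of 1 "f x" "f y", OF H agree])
  have ff: "f (f x) = f (f y)"
  proof
    fix i :: 'i
    from H obtain K where K: "\<And>n. n \<ge> K \<Longrightarrow> \<exists>m'\<ge>1. i + of_nat n = (of_nat m' :: 'i)"
      unfolding HI_def by metis
    show "f (f x) i = f (f y) i"
    proof (rule closure_transfer[OF fX[OF xX] fX[OF yX] _ fC[of K, unfolded C_def], where P = "(=)"])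
      fix s assume "s \<in> S K"
      then obtain k where k: "s = restrict (shift ^^ (m k)) X" "k \<ge> K" unfolding S_def by auto
      then obtain m' where "m' \<ge> 1" "i + of_nat (m k) = (of_nat m' :: 'i)"
        using K[of "m k"] m(1)[of k] by auto
      then show "s (f x) i = s (f y) i" using k agree fX xX yX by (simp add: shift_pow)
    qed
  qed
  have ninj: "\<not> inj_on f (f ` X)"
  proof
    assume "inj_on f (f ` X)"
    then have "f x = f y" using ff xX yX by (auto dest: inj_onD)
    then show False using neq by simp
  qed
  have ncr: "\<not> completely_regular_map X f"
  proof
    assume "completely_regular_map X f"
    then obtain g where g: "g \<in> X \<rightarrow>\<^sub>E X" "compose X f (compose X g f) = f"
      "compose X f g = compose X g f" unfolding completely_regular_map_def by blast
    have e1: "f z = f (g (f z))" if "z \<in> X" for z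
      using fun_cong[OF g(2), of z] that fX by (simp add: compose_def)
    have e2: "f (g w) = g (f w)" if "w \<in> X" for w
      using fun_cong[OF g(3), of w] that by (simp add: compose_def)
    have "f x = g (f (f x))" using e1[OF xX] e2[OF fX[OF xX]] by simp
    also have "\<dots> = g (f (f y))" using ff by simp
    also have "\<dots> = f y" using e1[OF yX] e2[OF fX[OF yX]] by simp
    finally show False using neq by simp
  qed
  show ?thesis using fE neq asym ninj ncr by blast
qed

theorem lemma4p10:
  shows "(\<forall>(A::nat set) (X::(nat \<Rightarrow> nat) set) x y.
           subshift A X \<and> x \<in> X \<and> y \<in> X \<and> fwd_li_yorke x y \<longrightarrow>
           (\<exists>f \<in> enveloping_semigroup X. f x \<noteq> f y \<and> fwd_asymptotic (f x) (f y) \<and>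
              \<not> inj_on f (f ` X) \<and> \<not> completely_regular_map X f)) \<and>
         (\<forall>(A::nat set) (X::(int \<Rightarrow> nat) set) x y.
           subshift A X \<and> x \<in> X \<and> y \<in> X \<and> fwd_li_yorke x y \<longrightarrow>
           (\<exists>f \<in> enveloping_semigroup X. f x \<noteq> f y \<and> fwd_asymptotic (f x) (f y) \<and>
              \<not> inj_on f (f ` X) \<and> \<not> completely_regular_map X f))"
proof (intro conjI allI impI)
  fix A and X :: "(nat \<Rightarrow> nat) set" and x y
  assume "subshift A X \<and> x \<in> X \<and> y \<in> X \<and> fwd_li_yorke x y"
  then show "\<exists>f \<in> enveloping_semigroup X. f x \<noteq> f y \<and> fwd_asymptotic (f x) (f y) \<and>
              \<not> inj_on f (f ` X) \<and> \<not> completely_regular_map X f"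
    by (elim conjE) (rule main_generic[OF HI_nat])
next
  fix A and X :: "(int \<Rightarrow> nat) set" and x y
  assume "subshift A X \<and> x \<in> X \<and> y \<in> X \<and> fwd_li_yorke x y"
  then show "\<exists>f \<in> enveloping_semigroup X. f x \<noteq> f y \<and> fwd_asymptotic (f x) (f y) \<and>
              \<not> inj_on f (f ` X) \<and> \<not> completely_regular_map X f"
    by (elim conjE) (rule main_generic[OF HI_int])
qed

end
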